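(* Let $V:\mathbb{Z}\to\mathbb{R}$ with $|V(j)|\to0$ as $|j|\to\infty$ and $H=-\Delta+V$ on $\ell^2(\mathbb{Z})$, where $(\Delta u)(j)=u(j+1)-2u(j)+u(j-1)$. Let $e\in\mathbb{R}\setminus[0,4]$ be an eigenvalue of $H$ with $\dim\ker(H-e)=1$. For $a>0$ let $(T_au)(j)=e^{a|j|}u(j)$. Then for all sufficiently small $a>0$ there exist $e_a\in\mathbb{R}$ and $\phi_a\in\ell^2(\mathbb{Z})\setminus\{0\}$ such that $e_a\to e$ as $a\to0$ and $$T_a(-\Delta+V)T_a^{-1}\phi_a=e_a\phi_a.$$ *)

theory Defs
  imports "HOL-Analysis.Analysis" "HOL-Library.Function_Algebras"
begin

definition l2 :: "(int \<Rightarrow> complex) set" where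
  "l2 = {u. (\<lambda>j. (norm (u j))\<^sup>2) summable_on UNIV}"

definition lap :: "(int \<Rightarrow> complex) \<Rightarrow> int \<Rightarrow> complex" where
  "lap u j = u (j + 1) - 2 * u j + u (j - 1)"

definition schr :: "(int \<Rightarrow> real) \<Rightarrow> (int \<Rightarrow> complex) \<Rightarrow> int \<Rightarrow> complex" where
  "schr V u j = - lap u j + complex_of_real (V j) * u j"

definition Tw :: "real \<Rightarrow> (int \<Rightarrow> complex) \<Rightarrow> int \<Rightarrow> complex" where
  "Tw a u j = complex_of_real (exp (a * \<bar>real_of_int j\<bar>)) * u j"

definition Tw_inv :: "real \<Rightarrow> (int \<Rightarrow> complex) \<Rightarrow> int \<Rightarrow> complex" where
  "Tw_inv a u j = complex_of_real (exp (- a * \<bar>real_of_int j\<bar>)) * u j"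

definition sscale :: "complex \<Rightarrow> (int \<Rightarrow> complex) \<Rightarrow> int \<Rightarrow> complex" where
  "sscale c u = (\<lambda>j. c * u j)"

definition eigsp :: "(int \<Rightarrow> real) \<Rightarrow> real \<Rightarrow> (int \<Rightarrow> complex) set" where
  "eigsp V e = {u \<in> l2. schr V u = sscale (complex_of_real e) u}"

end

theory Submission
  imports Defs
begin

lemma decay_seq:
  fixes s :: "nat \<Rightarrow> real" and K r B :: real
  assumes nn: "\<And>n. 0 \<le> s n" and bd: "\<And>n. s n \<le> B"
    and rec: "\<And>n. K * s (n+1) \<le> s (n+2) + s n"
    and r0: "0 < r" and r1: "r < 1" and rK: "r*K - r^2 = 1"
  shows "s (n+1) \<le> r * s n"
proof (rule ccontr)
  define d where "d m = s (m+1) - r * s m" for m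
  assume "\<not> s (n+1) \<le> r * s n"
  hence dpos: "d n > 0" by (simp add: d_def)
  have step: "d m \<le> r * d (m+1)" for m
  proof -
    have "r * d (m+1) = r * s (m+2) - r^2 * s (m+1)" by (simp add: d_def algebra_simps power2_eq_square)
    also have "\<dots> \<ge> r * (K * s (m+1) - s m) - r^2 * s (m+1)"
      using rec[of m] r0 by (simp add: mult_left_mono)
    finally have "r * d (m+1) \<ge> (r*K - r^2) * s (m+1) - r * s m" by (simp add: algebra_simps)
    thus ?thesis using rK by (simp add: d_def)
  qed
  have it: "d n \<le> r^k * d (n+k)" for k
  proof (induction k)
    case 0 then show ?case by simp
  next
    case (Suc k)
    have "r^k * d (n+k) \<le> r^k * (r * d (n+k+1))"
      using step[of "n+k"] r0 by (simp add: mult_left_mono)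
    then show ?case using Suc by (simp add: algebra_simps)
  qed
  have dB: "d m \<le> B" for m
  proof -
    have "r * s m \<ge> 0" using nn[of m] r0 by simp
    thus ?thesis using bd[of "m+1"] by (simp add: d_def)
  qed
  have Bpos: "B > 0" using dB[of n] dpos by linarith
  have "\<exists>k. r^k < d n / B" by (rule real_arch_pow_inv) (use dpos Bpos r1 in auto)
  then obtain k where k: "r^k < d n / B" by blast
  have "r^k * d (n+k) \<le> r^k * B" using dB[of "n+k"] r0 by (simp add: mult_left_mono)
  with it[of k] have "d n \<le> r^k * B" by linarith
  with k Bpos show False by (simp add: field_simps)
qed

lemma decay_seq2:
  fixes s :: "nat \<Rightarrow> real" and K r B :: real
  assumes nn: "\<And>n. 0 \<le> s n" and bd: "\<And>n. s n \<le> B"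
    and rec: "\<And>n. K * s (n+1) \<le> s (n+2) + s n"
    and r0: "0 < r" and r1: "r < 1" and rK: "r*K - r^2 = 1"
  shows "s n \<le> s 0 * r^n"
proof (induction n)
  case 0 then show ?case by simp
next
  case (Suc n)
  have "s (n+1) \<le> r * s n" by (rule decay_seq[OF nn bd rec r0 r1 rK])
  also have "\<dots> \<le> r * (s 0 * r^n)" using Suc r0 by (simp add: mult_left_mono)
  finally show ?case by (simp add: algebra_simps)
qed

lemma geom_int_summable:
  fixes \<rho> :: real
  assumes "0 \<le> \<rho>" "\<rho> < 1"
  shows "(\<lambda>j::int. \<rho> ^ nat \<bar>j\<bar>) summable_on UNIV"
proof -
  have g: "(\<lambda>n::nat. \<rho> ^ n) summable_on UNIV"
    using assms by (subst summable_on_UNIV_nonneg_real_iff) (auto intro: summable_geometric)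
  have A: "(\<lambda>j::int. \<rho> ^ nat \<bar>j\<bar>) summable_on (int ` UNIV)"
    by (subst summable_on_reindex) (auto simp: o_def g inj_on_def)
  have B: "(\<lambda>j::int. \<rho> ^ nat \<bar>j\<bar>) summable_on ((\<lambda>n. - int n) ` UNIV)"
    by (subst summable_on_reindex) (auto simp: o_def g inj_on_def)
  have U0: "x \<in> range int \<union> range (\<lambda>n. - int n)" for x :: int
    proof (cases "x \<ge> 0")
      case True then show ?thesis by (auto intro: image_eqI[of _ _ "nat x"])
    next
      case False then show ?thesis by (auto intro!: image_eqI[of _ _ "nat (-x)"])
    qed
  have U: "int ` UNIV \<union> (\<lambda>n. - int n) ` UNIV = (UNIV :: int set)" using U0 by blast
  show ?thesis using summable_on_union[OF A B] U by simp
qed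

lemma lin_aux: "(v::real) < (C-2)/2 \<Longrightarrow> C \<le> w + v \<Longrightarrow> 2 + (C-2)/2 \<le> w"
  by (simp add: field_simps)

theorem lemmaA1:
  fixes V :: "int \<Rightarrow> real" and e :: real
  assumes decay: "\<forall>\<epsilon>>0. \<exists>N. \<forall>j::int. \<bar>j\<bar> \<ge> N \<longrightarrow> \<bar>V j\<bar> < \<epsilon>"
    and out: "e \<notin> {0..4}"
    and eig: "\<exists>u\<in>eigsp V e. u \<noteq> (\<lambda>_. 0)"
    and simple: "vector_space.dim sscale (eigsp V e) = 1"
  shows "\<exists>a0>0. \<exists>ea :: real \<Rightarrow> real. \<exists>\<phi> :: real \<Rightarrow> int \<Rightarrow> complex.
           (ea \<longlongrightarrow> e) (at_right 0) \<and>
           (\<forall>a. 0 < a \<and> a < a0 \<longrightarrow>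
              \<phi> a \<in> l2 \<and> \<phi> a \<noteq> (\<lambda>_. 0) \<and>
              Tw a (schr V (Tw_inv a (\<phi> a))) = sscale (complex_of_real (ea a)) (\<phi> a))"
proof -
  obtain u where ul2: "u \<in> l2" and ueq: "schr V u = sscale (complex_of_real e) u"
    and unz: "u \<noteq> (\<lambda>_. 0)"
    using eig by (auto simp: eigsp_def)
  define c where "c = 2 - e"
  have cgt: "\<bar>c\<bar> > 2" using out by (auto simp: c_def)
  define \<delta> where "\<delta> = (\<bar>c\<bar> - 2) / 2"
  have \<delta>0: "\<delta> > 0" using cgt by (simp add: \<delta>_def)
  define K where "K = 2 + \<delta>"
  have rec0: "u (j+1) + u (j-1) = complex_of_real (c + V j) * u j" for j
  proof -
    have "schr V u j = sscale (complex_of_real e) u j" using ueq by simp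
    hence "- (u (j + 1) - 2 * u j + u (j - 1)) + complex_of_real (V j) * u j = complex_of_real e * u j"
      by (simp add: schr_def lap_def sscale_def)
    thus ?thesis by (simp add: c_def algebra_simps)
  qed
  obtain N where N: "\<forall>j::int. \<bar>j\<bar> \<ge> N \<longrightarrow> \<bar>V j\<bar> < \<delta>" using decay \<delta>0 by blast
  define M where "M = max N 0"
  have recK: "K * norm (u j) \<le> norm (u (j+1)) + norm (u (j-1))" if "\<bar>j\<bar> \<ge> M" for j
  proof -
    have "\<bar>V j\<bar> < \<delta>" using N that by (auto simp: M_def)
    moreover have "\<bar>c\<bar> \<le> \<bar>c + V j\<bar> + \<bar>V j\<bar>" using abs_triangle_ineq[of "c + V j" "- V j"] by simp
    ultimately have "K \<le> \<bar>c + V j\<bar>" unfolding K_def \<delta>_def by (rule lin_aux)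
    hence "K * norm (u j) \<le> \<bar>c + V j\<bar> * norm (u j)" by (simp add: mult_right_mono)
    also have "\<dots> = norm (u (j+1) + u (j-1))" unfolding rec0[of j] by (simp add: norm_mult del: of_real_add)
    also have "\<dots> \<le> norm (u (j+1)) + norm (u (j-1))" by (rule norm_triangle_ineq)
    finally show ?thesis .
  qed
  define S where "S = infsum (\<lambda>j. (norm (u j))\<^sup>2) UNIV"
  have sumu: "(\<lambda>j. (norm (u j))\<^sup>2) summable_on UNIV" using ul2 by (simp add: l2_def)
  have sqS: "(norm (u j))\<^sup>2 \<le> S" for j
  proof -
    have "infsum (\<lambda>j. (norm (u j))\<^sup>2) {j} \<le> S"
      unfolding S_def by (rule infsum_mono_neutral) (auto simp: sumu)
    thus ?thesis by simp
  qed
  define B where "B = 1 + S"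
  have bdu: "norm (u j) \<le> B" for j
  proof (cases "norm (u j) \<le> 1")
    case True
    have "0 \<le> (norm (u j))\<^sup>2" by simp
    then show ?thesis using sqS[of j] True unfolding B_def by linarith
  next
    case False
    hence "norm (u j) * 1 \<le> norm (u j) * norm (u j)" by (intro mult_left_mono) auto
    hence "norm (u j) \<le> (norm (u j))\<^sup>2" by (simp add: power2_eq_square)
    then show ?thesis using sqS[of j] unfolding B_def by linarith
  qed
  define sq where "sq = sqrt (K^2 - 4)"
  have K2: "K > 2" using \<delta>0 unfolding K_def by linarith
  have "2*2 < K*K" using K2 by (intro mult_strict_mono) auto
  hence K4: "4 < K^2" by (simp add: power2_eq_square)
  have sq0: "sq \<ge> 0" unfolding sq_def by (rule real_sqrt_ge_zero) (use K4 in linarith)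
  have sqsq: "sq^2 = K^2 - 4" unfolding sq_def by (rule real_sqrt_pow2) (use K4 in linarith)
  have sqK: "sq < K"
  proof -
    have "sq^2 < K^2" using sqsq by linarith
    thus ?thesis by (rule power2_less_imp_less) (use K2 in linarith)
  qed
  have sqK2: "K - 2 < sq"
  proof -
    have "(K-2)^2 < sq^2" using sqsq K2 by (simp add: power2_eq_square algebra_simps)
    thus ?thesis using sq0 by (rule power2_less_imp_less)
  qed
  define r where "r = (K - sq) / 2"
  have r0: "0 < r" and r1: "r < 1" using sqK sqK2 by (auto simp: r_def)
  have rK: "r*K - r^2 = 1"
  proof -
    have "r*K - r^2 = (K^2 - sq^2)/4" unfolding r_def by (simp add: power2_eq_square field_simps)
    thus ?thesis using sqsq by simp
  qed
  have pos: "norm (u (M + int n)) \<le> norm (u M) * r^n" for n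
  proof -
    have "(\<lambda>n. norm (u (M + int n))) n \<le> (\<lambda>n. norm (u (M + int n))) 0 * r^n"
    proof (rule decay_seq2[OF _ _ _ r0 r1 rK])
      show "norm (u (M + int n)) \<le> B" for n by (rule bdu)
      show "K * norm (u (M + int (n+1))) \<le> norm (u (M + int (n+2))) + norm (u (M + int n))" for n
        using recK[of "M + int n + 1"] by (simp add: M_def algebra_simps)
    qed simp
    thus ?thesis by simp
  qed
  have neg: "norm (u (- M - int n)) \<le> norm (u (-M)) * r^n" for n
  proof -
    have "(\<lambda>n. norm (u (- M - int n))) n \<le> (\<lambda>n. norm (u (- M - int n))) 0 * r^n"
    proof (rule decay_seq2[OF _ _ _ r0 r1 rK])
      show "norm (u (- M - int n)) \<le> B" for n by (rule bdu)
      show "K * norm (u (- M - int (n+1))) \<le> norm (u (- M - int (n+2))) + norm (u (- M - int n))" for n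
      proof -
        have Mn: "M \<ge> 0" by (simp add: M_def)
        have h: "K * norm (u (- M - int n - 1)) \<le> norm (u (- M - int n - 1 + 1)) + norm (u (- M - int n - 1 - 1))"
          by (rule recK) (use Mn in simp)
        have e1: "- M - int n - 1 + 1 = - M - int n" by simp
        have e2: "- M - int n - 1 - 1 = - M - int (n+2)" by simp
        have e3: "- M - int n - 1 = - M - int (n+1)" by simp
        have h2: "K * norm (u (- M - int n - 1)) \<le> norm (u (- M - int n)) + norm (u (- M - int (n+2)))"
          using h by (simp only: e1 e2)
        show ?thesis using h2 unfolding e3 by linarith
      qed
    qed simp
    thus ?thesis by simp
  qed
  define A where "A = Max ((\<lambda>j. norm (u j)) ` {-M..M})"
  have Aj: "norm (u j) \<le> A" if "j \<in> {-M..M}" for j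
    unfolding A_def using that by (intro Max_ge) auto
  have M0: "M \<ge> 0" by (simp add: M_def)
  define C where "C = A / r ^ nat M"
  have A0: "A \<ge> 0" using Aj[of 0] M0 norm_ge_zero[of "u 0"] by (simp del: norm_ge_zero)
  have glob: "norm (u j) \<le> C * r ^ nat \<bar>j\<bar>" for j
  proof -
    have rM: "r ^ nat M > 0" using r0 by simp
    consider "\<bar>j\<bar> \<le> M" | "j > M" | "j < -M" by linarith
    then show ?thesis
    proof cases
      case 1
      have "r ^ nat M \<le> r ^ nat \<bar>j\<bar>" using 1 r0 r1 by (intro power_decreasing) auto
      moreover have "A = C * r ^ nat M" using rM r0 by (simp add: C_def)
      moreover have "C \<ge> 0" using A0 rM by (simp add: C_def)
      ultimately have "A \<le> C * r ^ nat \<bar>j\<bar>" by (metis mult_left_mono)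
      moreover have "j \<in> {-M..M}" using 1 by auto
      ultimately show ?thesis using Aj[of j] by linarith
    next
      case 2
      define n where "n = nat (j - M)"
      have jn: "j = M + int n" using 2 by (simp add: n_def)
      have e1: "r ^ nat \<bar>j\<bar> = r ^ nat M * r ^ n"
        using 2 M0 by (simp add: jn power_add[symmetric] nat_add_distrib)
      have "norm (u j) \<le> norm (u M) * r^n" using pos[of n] jn by simp
      also have "\<dots> \<le> A * r^n" using Aj[of M] M0 r0 by (simp add: mult_right_mono)
      also have "\<dots> = C * r ^ nat \<bar>j\<bar>" using rM r0 by (simp add: e1 C_def)
      finally show ?thesis .
    next
      case 3
      define n where "n = nat (- M - j)"
      have jn: "j = - M - int n" using 3 by (simp add: n_def)
      have e1: "r ^ nat \<bar>j\<bar> = r ^ nat M * r ^ n"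
        using 3 M0 by (simp add: jn power_add[symmetric] nat_add_distrib add.commute)
      have "norm (u j) \<le> norm (u (-M)) * r^n" using neg[of n] jn by simp
      also have "\<dots> \<le> A * r^n" using Aj[of "-M"] M0 r0 by (simp add: mult_right_mono)
      also have "\<dots> = C * r ^ nat \<bar>j\<bar>" using rM r0 by (simp add: e1 C_def)
      finally show ?thesis .
    qed
  qed
  define a0 where "a0 = ln (1 / r)"
  have a00: "a0 > 0" using r0 r1 by (simp add: a0_def)
  have inv: "Tw_inv a (Tw a u) = u" for a
    by (rule ext) (simp add: Tw_def Tw_inv_def mult.assoc[symmetric] of_real_mult[symmetric] exp_add[symmetric])
  have main: "Tw a u \<in> l2 \<and> Tw a u \<noteq> (\<lambda>_. 0) \<and>
      Tw a (schr V (Tw_inv a (Tw a u))) = sscale (complex_of_real e) (Tw a u)"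
    if a: "0 < a" "a < a0" for a
  proof (intro conjI)
    show "Tw a (schr V (Tw_inv a (Tw a u))) = sscale (complex_of_real e) (Tw a u)"
      unfolding inv ueq by (rule ext) (simp add: Tw_def sscale_def)
    obtain j where "u j \<noteq> 0" using unz by auto
    thus "Tw a u \<noteq> (\<lambda>_. 0)" by (auto simp: Tw_def fun_eq_iff intro!: exI[of _ j])
    have ea: "exp a < 1 / r" using a unfolding a0_def
      by (metis exp_less_mono exp_ln r0 zero_less_divide_1_iff)
    define \<rho> where "\<rho> = (exp a * r)^2"
    have er: "exp a * r < 1" using ea r0 by (simp add: field_simps)
    have x0: "exp a * r > 0" using r0 by simp
    have \<rho>0: "0 \<le> \<rho>" unfolding \<rho>_def by simp
    have "(exp a * r) * (exp a * r) < (exp a * r) * 1" using x0 er by (intro mult_strict_left_mono)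
    hence \<rho>1: "\<rho> < 1" unfolding \<rho>_def power2_eq_square using er by linarith
    have gs: "(\<lambda>j::int. C^2 * \<rho> ^ nat \<bar>j\<bar>) summable_on UNIV"
      by (rule summable_on_cmult_right) (rule geom_int_summable[OF \<rho>0 \<rho>1])
    have "(\<lambda>j. (norm (Tw a u j))\<^sup>2) summable_on UNIV"
    proof (rule summable_on_comparison_test[OF gs])
      fix j :: int
      have ex: "exp (a * \<bar>real_of_int j\<bar>) = exp a ^ nat \<bar>j\<bar>"
        by (metis exp_of_nat_mult mult.commute of_int_abs of_nat_nat abs_ge_zero of_int_of_nat_eq)
      have "norm (Tw a u j) = exp a ^ nat \<bar>j\<bar> * norm (u j)"
        by (simp add: Tw_def norm_mult ex norm_power)
      also have "\<dots> \<le> exp a ^ nat \<bar>j\<bar> * (C * r ^ nat \<bar>j\<bar>)"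
        using glob[of j] by (simp add: mult_left_mono)
      also have "\<dots> = C * (exp a * r) ^ nat \<bar>j\<bar>" by (simp add: power_mult_distrib)
      finally have le: "norm (Tw a u j) \<le> C * (exp a * r) ^ nat \<bar>j\<bar>" .
      have "(norm (Tw a u j))\<^sup>2 \<le> (C * (exp a * r) ^ nat \<bar>j\<bar>)\<^sup>2"
        using le by (simp add: power_mono)
      also have "\<dots> = C^2 * \<rho> ^ nat \<bar>j\<bar>"
        by (simp add: \<rho>_def power_mult_distrib power_mult[symmetric] mult.commute)
      finally show "(norm (Tw a u j))\<^sup>2 \<le> C^2 * \<rho> ^ nat \<bar>j\<bar>" .
    qed simp
    thus "Tw a u \<in> l2" by (simp add: l2_def)
  qed
  show ?thesis
    by (rule exI[of _ a0], intro conjI a00, rule exI[of _ "\<lambda>_. e"], rule exI[of _ "\<lambda>a. Tw a u"])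
       (use main in auto)
qed

end
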